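(* Let $N\in\mathbb N$, $\nu>0$, and let $z_1^{(\nu-1)}>\dots>z_N^{(\nu-1)}>0$ be the zeros of the Laguerre polynomial $L_N^{(\nu-1)}$ (orthogonal with respect to $e^{-x}x^{\nu-1}$ on $]0,\infty[$). Let $r_i:=\sqrt{2z_i^{(\nu-1)}}$ and form $S=(s_{i,j})_{i,j=1,\dots,N}$ with $$s_{i,i}:=1+\frac{2\nu}{r_i^2}+2\sum_{l\ne i}(r_i-r_l)^{-2}+2\sum_{l\ne i}(r_i+r_l)^{-2},\qquad s_{i,j}:=2(r_i+r_j)^{-2}-2(r_i-r_j)^{-2}\ (i\ne j).$$ Then $\det S=N!\cdot 2^N$. *)

theory Defs
  imports "HOL-Computational_Algebra.Polynomial" "Jordan_Normal_Form.Determinant"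
begin

definition laguerre :: "nat \<Rightarrow> real \<Rightarrow> real poly" where
  "laguerre n a = (\<Sum>k\<le>n. monom ((-1)^k * ((real n + a) gchoose (n - k)) / fact k) k)"

definition S_mat :: "nat \<Rightarrow> real \<Rightarrow> (nat \<Rightarrow> real) \<Rightarrow> real mat" where
  "S_mat N \<nu> z = (let r = (\<lambda>i. sqrt (2 * z i)) in
     mat N N (\<lambda>(i,j).
       if i = j then
         1 + 2 * \<nu> / (r i)^2
           + 2 * (\<Sum>l\<in>{0..<N} - {i}. 1 / (r i - r l)^2)
           + 2 * (\<Sum>l\<in>{0..<N} - {i}. 1 / (r i + r l)^2)
       else 2 / (r i + r j)^2 - 2 / (r i - r j)^2))"

end

theory Submission
  imports Defs
begin

lemma gbin_step: "of_nat (Suc m) * ((\<alpha>::real) gchoose Suc m) = (\<alpha> - of_nat m) * (\<alpha> gchoose m)"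
proof -
  have "fact (Suc m) * (\<alpha> gchoose Suc m) = (\<Prod>i = 0..<Suc m. \<alpha> - of_nat i)"
    by (rule gbinomial_mult_fact)
  also have "\<dots> = (\<alpha> - of_nat m) * (\<Prod>i = 0..<m. \<alpha> - of_nat i)" by simp
  also have "\<dots> = (\<alpha> - of_nat m) * (fact m * (\<alpha> gchoose m))" by (simp add: gbinomial_mult_fact)
  finally have "fact m * (of_nat (Suc m) * (\<alpha> gchoose Suc m)) = fact m * ((\<alpha> - of_nat m) * (\<alpha> gchoose m))"
    by (simp add: algebra_simps)
  thus ?thesis by simp
qed

definition lc :: "nat \<Rightarrow> real \<Rightarrow> nat \<Rightarrow> real" where
  "lc n a k = (if k \<le> n then (-1)^k * ((real n + a) gchoose (n - k)) / fact k else 0)"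

lemma coeff_laguerre: "coeff (laguerre n a) k = lc n a k"
  unfolding laguerre_def lc_def by (simp add: coeff_sum coeff_monom)

lemma lc_rec: "real (k+1) * (real k + a + 1) * lc n a (k+1) = (real k - real n) * lc n a k"
proof (cases "k < n")
  case True
  define m where "m = n - k - 1"
  have nk: "n - k = Suc m" "n - (k+1) = m" using True unfolding m_def by auto
  have am: "real n + a - real m = real k + a + 1" using True unfolding m_def by (simp add: of_nat_diff)
  have "real (k+1) * (real k + a + 1) * lc n a (k+1)
      = - ((real k + a + 1) * ((real n + a) gchoose m)) * (-1)^k / fact k"
  proof -
    have f: "fact (k+1) = real (k+1) * (fact k :: real)" by simp
    have p: "(-1::real)^(k+1) = - ((-1)^k)" by simp
    have "real (k+1) * (real k + a + 1) * lc n a (k+1) =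
      real (k+1) * (real k + a + 1) * ((-1)^(k+1) * ((real n + a) gchoose m) / fact (k+1))"
      using True nk by (simp add: lc_def)
    also have "\<dots> = - ((real k + a + 1) * ((real n + a) gchoose m)) * (-1)^k / fact k"
    proof -
      have g: "\<And>F G s::real. F > 0 \<Longrightarrow> real (k+1) * (real k + a + 1) * (- s * G / (real (k+1) * F))
         = - ((real k + a + 1) * G) * s / F"
      proof -
        fix F G s :: real assume "F > 0"
        have c: "real (k+1) \<noteq> 0" by simp
        have "real (k+1) * (real k + a + 1) * (- s * G / (real (k+1) * F)) = (real k + a + 1) * (- s * G / F)"
          using c by (simp add: divide_simps)
        then show "real (k+1) * (real k + a + 1) * (- s * G / (real (k+1) * F))
         = - ((real k + a + 1) * G) * s / F" using \<open>F > 0\<close> by (simp add: field_simps)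
      qed
      show ?thesis unfolding f p by (rule g) simp
    qed
    finally show ?thesis .
  qed
  also have "\<dots> = - (of_nat (Suc m) * ((real n + a) gchoose Suc m)) * (-1)^k / fact k"
  proof -
    have eq: "(real k + a + 1) * ((real n + a) gchoose m) = of_nat (Suc m) * ((real n + a) gchoose Suc m)"
      by (subst gbin_step) (simp add: am)
    show ?thesis by (simp only: eq)
  qed
  also have "\<dots> = (real k - real n) * lc n a k"
  proof -
    have rm: "real m = real n - real k - 1" using True unfolding m_def by (simp add: of_nat_diff)
    have hY: "\<And>Y. real n * Y = Y + (real k * Y + real m * Y)" by (simp add: rm algebra_simps)
    show ?thesis using True nk by (simp add: lc_def field_simps) (simp only: hY)
  qed
  finally show ?thesis .
next
  case False
  then show ?thesis by (cases "k = n") (auto simp: lc_def)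
qed

lemma laguerre_ode:
  "pCons 0 (pderiv (pderiv (laguerre n a))) - pCons 0 (pderiv (laguerre n a))
   + smult (a+1) (pderiv (laguerre n a)) + smult (real n) (laguerre n a) = 0"
proof (rule poly_eqI)
  fix k
  have r: "real (k+1) * (real k + a + 1) * lc n a (k+1) = (real k - real n) * lc n a k" by (rule lc_rec)
  show "coeff (pCons 0 (pderiv (pderiv (laguerre n a))) - pCons 0 (pderiv (laguerre n a))
   + smult (a+1) (pderiv (laguerre n a)) + smult (real n) (laguerre n a)) k = coeff 0 k"
  proof (cases k)
    case 0
    then show ?thesis using r by (simp add: coeff_pderiv coeff_laguerre algebra_simps)
  next
    case (Suc m)
    then show ?thesis using r by (simp add: coeff_pderiv coeff_laguerre algebra_simps)
  qed
qed

lemma laguerre_lead: "coeff (laguerre n a) n \<noteq> 0" and laguerre_deg: "degree (laguerre n a) = n"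
proof -
  show c: "coeff (laguerre n a) n \<noteq> 0" by (simp add: coeff_laguerre lc_def)
  have "degree (laguerre n a) \<le> n" by (rule degree_le) (simp add: coeff_laguerre lc_def)
  moreover have "n \<le> degree (laguerre n a)" using c le_degree by blast
  ultimately show "degree (laguerre n a) = n" by simp
qed

lemma laguerre_factor:
  assumes inj: "inj_on z {0..<N}" and roots: "{x. poly (laguerre N a) x = 0} = z ` {0..<N}"
  shows "laguerre N a = smult (coeff (laguerre N a) N) (\<Prod>l\<in>{0..<N}. [:-z l,1:])"
proof (rule ccontr)
  let ?p = "laguerre N a"
  let ?q = "\<Prod>l\<in>{0..<N}. [:-z l,1:] :: real poly"
  define d where "d = ?p - smult (coeff ?p N) ?q"
  assume ne: "?p \<noteq> smult (coeff ?p N) ?q"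
  hence dne: "d \<noteq> 0" unfolding d_def by simp
  have dq: "degree ?q = N" by (subst degree_prod_eq_sum_degree) auto
  have lq: "coeff ?q N = 1" using lead_coeff_prod[of "\<lambda>l. [:-z l,1:]" "{0..<N}"] dq by simp
  have "degree d \<le> N" unfolding d_def using laguerre_deg[of N a] dq
    by (intro degree_diff_le) auto
  moreover have "coeff d N = 0" unfolding d_def using lq by simp
  ultimately have dlt: "degree d < N" using dne
    by (metis antisym_conv2 leading_coeff_0_iff)
  have sub: "z ` {0..<N} \<subseteq> {x. poly d x = 0}"
  proof
    fix x assume x: "x \<in> z ` {0..<N}"
    then obtain l where l: "l < N" "x = z l" by auto
    have "poly ?p x = 0" using x roots by auto
    moreover have "poly ?q x = 0" using l by (auto simp: poly_prod intro!: prod_zero)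
    ultimately show "x \<in> {x. poly d x = 0}" unfolding d_def by simp
  qed
  have "N = card (z ` {0..<N})" using inj by (simp add: card_image)
  also have "\<dots> \<le> card {x. poly d x = 0}" using sub poly_roots_finite[OF dne] by (rule card_mono[rotated])
  also have "\<dots> \<le> degree d" by (rule card_poly_roots_bound[OF dne])
  finally show False using dlt by simp
qed

lemma stieltjes:
  assumes inj: "inj_on z {0..<N}" and roots: "{x. poly (laguerre N (\<nu> - 1)) x = 0} = z ` {0..<N}"
    and i: "i < N" and zi: "z i \<noteq> 0"
  shows "2 * (\<Sum>l\<in>{0..<N}-{i}. 1/(z i - z l)) = 1 - \<nu> / z i"
proof -
  let ?p = "laguerre N (\<nu> - 1)"
  define c where "c = coeff ?p N"
  define A where "A = {0..<N} - {i}"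
  define g where "g = smult c (\<Prod>l\<in>A. [:-z l,1:])"
  have c0: "c \<noteq> 0" unfolding c_def by (rule laguerre_lead)
  have pg: "?p = [:-z i,1:] * g"
    using laguerre_factor[OF inj roots] i unfolding g_def A_def c_def
    by (simp add: prod.remove[of "{0..<N}" i] mult_smult_right)
  have d1: "pderiv ?p = g + [:-z i,1:] * pderiv g" unfolding pg pderiv_mult by (simp add: pderiv_pCons)
  have d2: "pderiv (pderiv ?p) = 2 * pderiv g + [:-z i,1:] * pderiv (pderiv g)"
    unfolding d1 pderiv_add pderiv_mult by (simp add: pderiv_pCons algebra_simps mult_2)
  have ode: "poly (pCons 0 (pderiv (pderiv ?p)) - pCons 0 (pderiv ?p)
   + smult (\<nu> - 1 + 1) (pderiv ?p) + smult (real N) ?p) (z i) = 0"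
    by (subst laguerre_ode) simp
  have p0: "poly ?p (z i) = 0" using roots i by auto
  have e1: "2 * z i * poly (pderiv g) (z i) + (\<nu> - z i) * poly g (z i) = 0"
  proof -
    have e0: "poly (pderiv (pderiv ?p)) (z i) = 2 * poly (pderiv g) (z i)" by (simp add: d2)
    have e0': "poly (pderiv ?p) (z i) = poly g (z i)" by (simp add: d1)
    show ?thesis using ode p0 e0 e0' by (simp add: algebra_simps)
  qed
  define G where "G = (\<Prod>l\<in>A. z i - z l)"
  have finA: "finite A" unfolding A_def by simp
  have G0: "G \<noteq> 0" unfolding G_def A_def using inj i
    by (auto simp: inj_on_def)
  have gz: "poly g (z i) = c * G" unfolding g_def G_def by (simp add: poly_prod)
  have g'z: "poly (pderiv g) (z i) = c * G * (\<Sum>l\<in>A. 1/(z i - z l))"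
  proof -
    have "poly (pderiv g) (z i) = c * (\<Sum>a\<in>A. \<Prod>l\<in>A-{a}. z i - z l)"
      unfolding g_def pderiv_smult pderiv_prod by (simp add: poly_sum poly_prod pderiv_pCons)
    also have "\<dots> = c * (\<Sum>a\<in>A. G * (1/(z i - z a)))"
    proof -
      have "\<And>a. a \<in> A \<Longrightarrow> (\<Prod>l\<in>A-{a}. z i - z l) = G * (1/(z i - z a))"
      proof -
        fix a assume a: "a \<in> A"
        have ne: "z i - z a \<noteq> 0" using a inj i unfolding A_def by (auto simp: inj_on_def)
        have "G = (z i - z a) * (\<Prod>l\<in>A-{a}. z i - z l)" unfolding G_def
          using a finA by (simp add: prod.remove)
        thus "(\<Prod>l\<in>A-{a}. z i - z l) = G * (1/(z i - z a))" using ne by simp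
      qed
      thus ?thesis by simp
    qed
    finally show ?thesis by (simp add: sum_distrib_left)
  qed
  have "c * G * (2 * z i * (\<Sum>l\<in>A. 1/(z i - z l)) + (\<nu> - z i)) = 0"
    using e1 unfolding gz g'z by (simp add: algebra_simps)
  hence "2 * z i * (\<Sum>l\<in>A. 1/(z i - z l)) + (\<nu> - z i) = 0" using c0 G0 by simp
  hence "2 * (\<Sum>l\<in>A. 1/(z i - z l)) = (z i - \<nu>) / z i" using zi by (simp add: field_simps)
  thus ?thesis unfolding A_def using zi by (simp add: diff_divide_distrib)
qed


lemma pow_split: "b < k \<Longrightarrow> (x::real)^(k-b) = x * x^(k-1-b)"
proof -
  assume "b < k"
  hence "k - b = Suc (k - 1 - b)" by arith
  thus ?thesis by simp
qed

lemma H_rec: "(\<Sum>b<Suc(Suc k). (x::real)^(Suc k-b)*y^b) = x*(\<Sum>b<Suc k. x^(k-b)*y^b) + y^Suc k"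
proof -
  have "(\<Sum>b<Suc(Suc k). x^(Suc k-b)*y^b) = (\<Sum>b<Suc k. x^(Suc k-b)*y^b) + y^Suc k"
    by (subst sum.lessThan_Suc) simp
  also have "(\<Sum>b<Suc k. x^(Suc k-b)*y^b) = (\<Sum>b<Suc k. x*(x^(k-b)*y^b))"
    by (rule sum.cong) (auto simp: Suc_diff_le)
  finally show ?thesis by (simp only: sum_distrib_left)
qed

lemma H_id: "((x::real) - y) * (\<Sum>b<Suc k. x^(k-b)*y^b) = x^Suc k - y^Suc k"
proof (induction k)
  case 0 then show ?case by simp
next
  case (Suc k)
  have "(x - y) * (\<Sum>b<Suc (Suc k). x^(Suc k-b)*y^b) = x * ((x - y) * (\<Sum>b<Suc k. x^(k-b)*y^b)) + (x-y)*y^Suc k"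
    unfolding H_rec by (simp add: algebra_simps)
  also have "\<dots> = x^Suc (Suc k) - y^Suc (Suc k)" unfolding Suc by (simp add: algebra_simps)
  finally show ?case .
qed

lemma Sig_rec: "(\<Sum>b<Suc k. real(Suc k - b)*(x::real)^(Suc k-1-b)*y^b)
   = x*(\<Sum>b<k. real(k-b)*x^(k-1-b)*y^b) + (\<Sum>b<Suc k. x^(k-b)*y^b)"
proof -
  have "(\<Sum>b<Suc k. real(Suc k - b)*x^(Suc k-1-b)*y^b)
      = (\<Sum>b<Suc k. real(k - b)*x^(k-b)*y^b + x^(k-b)*y^b)"
  proof (rule sum.cong)
    fix b assume "b \<in> {..<Suc k}"
    hence "real (Suc k - b) = real (k - b) + 1" "Suc k - 1 - b = k - b" by (auto simp: Suc_diff_le)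
    thus "real(Suc k - b)*x^(Suc k-1-b)*y^b = real(k - b)*x^(k-b)*y^b + x^(k-b)*y^b"
      by (simp add: algebra_simps)
  qed simp
  also have "\<dots> = (\<Sum>b<Suc k. real(k - b)*x^(k-b)*y^b) + (\<Sum>b<Suc k. x^(k-b)*y^b)"
    by (simp add: sum.distrib)
  also have "(\<Sum>b<Suc k. real(k - b)*x^(k-b)*y^b) = (\<Sum>b<k. real(k - b)*x^(k-b)*y^b)"
    by simp
  also have "\<dots> = (\<Sum>b<k. x*(real(k-b)*x^(k-1-b)*y^b))"
    by (rule sum.cong) (auto simp: pow_split)
  also have "\<dots> = x*(\<Sum>b<k. real(k-b)*x^(k-1-b)*y^b)"
    by (simp add: sum_distrib_left)
  finally show ?thesis .
qed

lemma key_mult: "(x::real)^(k+1) + y*x^k - 2*y^(k+1)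
   = ((2*k+1)*x^k - 2*(x-y)*(\<Sum>b<k. real(k-b)*x^(k-1-b)*y^b))*(x-y)"
proof (induction k)
  case 0 then show ?case by (simp add: algebra_simps)
next
  case (Suc k)
  let ?S = "\<Sum>b<k. real(k-b)*x^(k-1-b)*y^b"
  let ?H = "\<Sum>b<Suc k. x^(k-b)*y^b"
  have r: "(\<Sum>b<Suc k. real(Suc k - b)*x^(Suc k-1-b)*y^b) = x * ?S + ?H" by (rule Sig_rec)
  have h: "(x-y)*?H = x^Suc k - y^Suc k" by (rule H_id)
  have "x^(Suc k+1) + y*x^Suc k - 2*y^(Suc k+1) = x*(x^(k+1) + y*x^k - 2*y^(k+1)) + 2*y^(k+1)*(x-y)"
    by (simp add: algebra_simps)
  also have "\<dots> = x*(((2*k+1)*x^k - 2*(x-y)*?S)*(x-y)) + 2*y^(k+1)*(x-y)" using Suc by simp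
  also have "\<dots> = ((2*real (Suc k)+1)*x^Suc k - 2*(x-y)*(x * ?S + ?H))*(x-y)"
  proof -
    have e: "((2*real (Suc k)+1)*x^Suc k - 2*(x-y)*(x * ?S + ?H))*(x-y)
      = ((2*real (Suc k)+1)*x^Suc k - 2*(x-y)*(x * ?S))*(x-y) - 2*(x-y)*((x-y)*?H)"
      by (simp add: algebra_simps)
    show ?thesis unfolding e h by (simp add: algebra_simps)
  qed
  finally show ?case unfolding r .
qed

lemma key_id: "(x::real) \<noteq> y \<Longrightarrow> (x^(k+1) + y*x^k - 2*y^(k+1))/(x-y)^2
   = (2*k+1)*x^k/(x-y) - 2*(\<Sum>b<k. real(k-b)*x^(k-1-b)*y^b)"
proof -
  assume "x \<noteq> y"
  hence d: "x - y \<noteq> 0" by simp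
  have g: "\<And>A S d::real. d \<noteq> 0 \<Longrightarrow> ((A - 2*d*S)*d)/d^2 = A/d - 2*S"
    by (simp add: field_simps power2_eq_square)
  show ?thesis by (subst key_mult) (rule g[OF d])
qed


lemma row_z:
  fixes z :: "nat \<Rightarrow> real" and x \<nu> :: real
  assumes fin: "finite A" and x0: "x \<noteq> 0" and ne: "\<And>j. j \<in> A \<Longrightarrow> z j \<noteq> x"
    and stj: "2*(\<Sum>j\<in>A. 1/(x - z j)) = 1 - \<nu>/x"
  shows "x^k + \<nu>*x^k/x + 2*(\<Sum>j\<in>A. (x+z j)*x^k/(x-z j)^2) - 4*(\<Sum>j\<in>A. z j^(k+1)/(x - z j)^2)
   = (2*real k+2)*x^k - 2*real k*\<nu>*x^k/x - 4*(\<Sum>b<k. real(k-b)*x^(k-1-b)*(\<Sum>j\<in>A. z j^b))"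
proof -
  have "2*(\<Sum>j\<in>A. (x+z j)*x^k/(x-z j)^2) - 4*(\<Sum>j\<in>A. z j^(k+1)/(x - z j)^2)
     = 2*(\<Sum>j\<in>A. (x^(k+1) + z j*x^k - 2*z j^(k+1))/(x-z j)^2)"
    by (simp add: sum_distrib_left sum_subtractf[symmetric] algebra_simps diff_divide_distrib add_divide_distrib)
  also have "\<dots> = 2*(\<Sum>j\<in>A. (2*real k+1)*x^k/(x-z j) - 2*(\<Sum>b<k. real(k-b)*x^(k-1-b)*z j^b))"
  proof -
    have "\<And>j. j \<in> A \<Longrightarrow> (x^(k+1) + z j*x^k - 2*z j^(k+1))/(x-z j)^2
       = (2*real k+1)*x^k/(x-z j) - 2*(\<Sum>b<k. real(k-b)*x^(k-1-b)*z j^b)"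
      by (rule key_id) (use ne in force)
    thus ?thesis by simp
  qed
  also have "\<dots> = (2*real k+1)*x^k * (2*(\<Sum>j\<in>A. 1/(x-z j))) - 4*(\<Sum>j\<in>A. \<Sum>b<k. real(k-b)*x^(k-1-b)*z j^b)"
  proof -
    have s1: "(\<Sum>j\<in>A. (2*real k+1)*x^k/(x-z j)) = (2*real k+1)*x^k * (\<Sum>j\<in>A. 1/(x-z j))"
      by (simp add: sum_distrib_left)
    have s2: "(\<Sum>j\<in>A. (2*real k+1)*x^k/(x-z j) - 2*(\<Sum>b<k. real(k-b)*x^(k-1-b)*z j^b))
      = (\<Sum>j\<in>A. (2*real k+1)*x^k/(x-z j)) - 2*(\<Sum>j\<in>A. (\<Sum>b<k. real(k-b)*x^(k-1-b)*z j^b))"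
      by (simp only: sum_subtractf sum_distrib_left)
    show ?thesis unfolding s2 s1 by (simp add: algebra_simps)
  qed
  also have "(\<Sum>j\<in>A. \<Sum>b<k. real(k-b)*x^(k-1-b)*z j^b) = (\<Sum>b<k. real(k-b)*x^(k-1-b)*(\<Sum>j\<in>A. z j^b))"
    by (subst sum.swap) (simp add: sum_distrib_left)
  finally have e: "2*(\<Sum>j\<in>A. (x+z j)*x^k/(x-z j)^2) - 4*(\<Sum>j\<in>A. z j^(k+1)/(x - z j)^2)
     = (2*real k+1)*x^k * (1 - \<nu>/x) - 4*(\<Sum>b<k. real(k-b)*x^(k-1-b)*(\<Sum>j\<in>A. z j^b))"
    unfolding stj .
  have "x^k + \<nu>*x^k/x + (2*real k+1)*x^k * (1 - \<nu>/x) = (2*real k+2)*x^k - 2*real k*\<nu>*x^k/x"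
    using x0 by (simp add: field_simps)
  then show ?thesis using e by linarith
qed


lemma poly_trunc:
  fixes p :: "real poly"
  assumes "\<forall>m\<ge>n. coeff p m = 0"
  shows "poly p x = (\<Sum>m<n. coeff p m * x^m)"
proof (cases "p = 0")
  case True then show ?thesis by simp
next
  case False
  have "coeff p (degree p) \<noteq> 0" using False by simp
  hence dn: "degree p < n" using assms by (meson not_le)
  have "poly p x = (\<Sum>m\<le>degree p. coeff p m * x^m)" by (rule poly_altdef)
  also have "\<dots> = (\<Sum>m<n. coeff p m * x^m)"
    by (rule sum.mono_neutral_left) (use dn in \<open>auto intro: le_degree\<close>)
  finally show ?thesis .
qed

definition Qp :: "real \<Rightarrow> (nat \<Rightarrow> real) \<Rightarrow> nat \<Rightarrow> real poly" where
  "Qp \<nu> P k = monom (-2*real k*\<nu>) (k-1)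
     + (\<Sum>b<k. monom (-4*real(k-b)*P b) (k-1-b) + monom (4*real(k-b)) (k-1))"

lemma Qp_coeff: "k \<le> m \<Longrightarrow> coeff (Qp \<nu> P k) m = 0"
  by (cases k) (auto simp: Qp_def coeff_monom coeff_sum intro!: sum.neutral)

lemma Qp_poly: "x \<noteq> 0 \<Longrightarrow> poly (Qp \<nu> P k) x
   = - 2*real k*\<nu>*x^k/x - 4*(\<Sum>b<k. real(k-b)*x^(k-1-b)*(P b - x^b))"
proof -
  assume x: "x \<noteq> 0"
  have a: "-2*real k*\<nu>*x^(k-1) = - 2*real k*\<nu>*x^k/x"
  proof (cases k)
    case 0 then show ?thesis by simp
  next
    case (Suc m) then show ?thesis using x by simp
  qed
  have b: "(\<Sum>b<k. -4*real(k-b)*P b * x^(k-1-b) + 4*real(k-b) * x^(k-1))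
      = - 4*(\<Sum>b<k. real(k-b)*x^(k-1-b)*(P b - x^b))"
  proof -
    have "\<And>b. b < k \<Longrightarrow> x^(k-1-b) * x^b = x^(k-1)"
      by (simp flip: power_add)
    hence "(\<Sum>b<k. -4*real(k-b)*P b * x^(k-1-b) + 4*real(k-b) * x^(k-1))
      = (\<Sum>b<k. - 4*(real(k-b)*x^(k-1-b)*(P b - x^b)))"
      by (intro sum.cong) (auto simp: algebra_simps)
    thus ?thesis by (simp add: sum_distrib_left)
  qed
  show ?thesis unfolding Qp_def using a b by (simp add: poly_sum poly_monom)
qed

lemma rterm1:
  fixes a b x y :: real
  assumes "a > 0" "b > 0" "a^2 = 2*x" "b^2 = 2*y" "x \<noteq> y"
  shows "1/(a-b)^2 + 1/(a+b)^2 = (x+y)/(x-y)^2"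
proof -
  have x: "x = a^2/2" and y: "y = b^2/2" using assms by auto
  have "a \<noteq> b" using assms by auto
  hence d: "a - b \<noteq> 0" and s: "a + b \<noteq> 0" using assms by auto
  have e1: "x - y = (a-b)*(a+b)/2" "x + y = ((a-b)^2 + (a+b)^2)/4"
    unfolding x y by (simp_all add: algebra_simps power2_eq_square)
  have g: "\<And>d s::real. d\<noteq>0 \<Longrightarrow> s\<noteq>0 \<Longrightarrow> 1/d^2 + 1/s^2 = ((d^2+s^2)/4)/((d*s/2)^2)"
    by (simp add: field_simps)
  show ?thesis unfolding e1 by (rule g[OF d s])
qed

lemma rterm2:
  fixes a b x y :: real
  assumes "a > 0" "b > 0" "a^2 = 2*x" "b^2 = 2*y" "x \<noteq> y"
  shows "(2/(a+b)^2 - 2/(a-b)^2)*b = a*(-4*y/(x-y)^2)"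
proof -
  have x: "x = a^2/2" and y: "y = b^2/2" using assms by auto
  have "a \<noteq> b" using assms by auto
  hence d: "a - b \<noteq> 0" and s: "a + b \<noteq> 0" using assms by auto
  have e1: "x - y = (a-b)*(a+b)/2" "y = ((a+b)-(a-b))^2/8"
    unfolding x y by (simp_all add: algebra_simps power2_eq_square)
  have ab: "a = ((a+b)+(a-b))/2" "b = ((a+b)-(a-b))/2" by simp_all
  have g: "\<And>d s::real. d\<noteq>0 \<Longrightarrow> s\<noteq>0 \<Longrightarrow>
     (2/s^2 - 2/d^2)*((s-d)/2) = ((s+d)/2)*(-4*((s-d)^2/8)/((d*s/2)^2))"
    by (simp add: field_simps) (simp add: eval_nat_numeral algebra_simps)
  have "(2/(a+b)^2 - 2/(a-b)^2)*(((a+b)-(a-b))/2) = (((a+b)+(a-b))/2)*(-4*(((a+b)-(a-b))^2/8)/(((a-b)*(a+b)/2)^2))"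
    by (rule g[OF d s])
  thus ?thesis using e1 ab by metis
qed

lemma prod_even: "(\<Prod>k\<in>{0..<N}. 2*real k+2) = fact N * 2^N"
  by (induction N) (auto simp: algebra_simps)


theorem corollary3p4:
  fixes N :: nat and \<nu> :: real and z :: "nat \<Rightarrow> real"
  assumes "\<nu> > 0"
    and "\<And>i j. i < j \<Longrightarrow> j < N \<Longrightarrow> z i > z j"
    and "\<And>i. i < N \<Longrightarrow> z i > 0"
    and "{x. poly (laguerre N (\<nu> - 1)) x = 0} = z ` {0..<N}"
  shows "det (S_mat N \<nu> z) = fact N * 2 ^ N"
proof -
  note dec = assms(2) and zpos = assms(3) and roots = assms(4)
  have zne: "\<And>i j. i < N \<Longrightarrow> j < N \<Longrightarrow> i \<noteq> j \<Longrightarrow> z i \<noteq> z j"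
    by (metis dec less_irrefl linorder_neqE_nat)
  have inj: "inj_on z {0..<N}" unfolding inj_on_def using zne by fastforce
  define r where "r = (\<lambda>i. sqrt (2 * z i))"
  have rpos: "r i > 0" if "i < N" for i unfolding r_def using zpos[OF that] by simp
  have rsq: "(r i)^2 = 2 * z i" if "i < N" for i unfolding r_def using zpos[OF that] by simp
  define S where "S = S_mat N \<nu> z"
  have Sc: "S \<in> carrier_mat N N" unfolding S_def S_mat_def Let_def by simp
  have Sij: "\<And>i j. i < N \<Longrightarrow> j < N \<Longrightarrow> S $$ (i,j) = (if i = j then
         1 + 2 * \<nu> / (r i)^2
           + 2 * (\<Sum>l\<in>{0..<N} - {i}. 1 / (r i - r l)^2)
           + 2 * (\<Sum>l\<in>{0..<N} - {i}. 1 / (r i + r l)^2)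
       else 2 / (r i + r j)^2 - 2 / (r i - r j)^2)"
    unfolding S_def S_mat_def Let_def r_def by simp
  define P where "P = (\<lambda>b. \<Sum>j\<in>{0..<N}. z j ^ b)"
  define X where "X = mat N N (\<lambda>(i,k). r i * z i ^ k)"
  define B where "B = mat N N (\<lambda>(m,k). (if m = k then 2*real k+2 else 0) + coeff (Qp \<nu> P k) m)"
  have Xc: "X \<in> carrier_mat N N" unfolding X_def by simp
  have Bc: "B \<in> carrier_mat N N" unfolding B_def by simp
  have row: "(\<Sum>j\<in>{0..<N}. S$$(i,j) * (r j * z j^k)) = r i * ((2*real k+2)*z i^k + poly (Qp \<nu> P k) (z i))"
    if i: "i < N" for i k
  proof -
    define A where "A = {0..<N} - {i}"
    have finA: "finite A" unfolding A_def by simp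
    have zi: "z i \<noteq> 0" using zpos i by (metis less_irrefl)
    have ne: "\<And>j. j \<in> A \<Longrightarrow> z j \<noteq> z i" using zne i unfolding A_def by auto
    have stj: "2 * (\<Sum>l\<in>A. 1/(z i - z l)) = 1 - \<nu>/z i"
      unfolding A_def by (rule stieltjes[OF inj roots i zi])
    have t1: "\<And>l. l \<in> A \<Longrightarrow> 1/(r i - r l)^2 + 1/(r i + r l)^2 = (z i + z l)/(z i - z l)^2"
      by (rule rterm1) (use i rpos rsq zne in \<open>auto simp: A_def\<close>)
    have t2: "\<And>l. l \<in> A \<Longrightarrow> S$$(i,l) * (r l * z l^k) = r i * (-4 * (z l^(k+1)/(z i - z l)^2))"
    proof -
      fix l assume l: "l \<in> A"
      have h1: "(2/(r i + r l)^2 - 2/(r i - r l)^2) * r l = r i * (-4 * z l/(z i - z l)^2)"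
        by (rule rterm2) (use i rpos rsq zne l in \<open>auto simp: A_def\<close>)
      have h2: "S$$(i,l) = 2/(r i + r l)^2 - 2/(r i - r l)^2" using Sij[OF i, of l] l i unfolding A_def by auto
      have "S$$(i,l) * (r l * z l^k) = ((2/(r i + r l)^2 - 2/(r i - r l)^2) * r l) * z l^k"
        unfolding h2 by (simp only: mult.assoc)
      also have "\<dots> = r i * (-4 * z l/(z i - z l)^2) * z l^k" unfolding h1 ..
      also have "\<dots> = r i * (-4 * (z l^(k+1)/(z i - z l)^2))" by (simp add: algebra_simps)
      finally show "S$$(i,l) * (r l * z l^k) = r i * (-4 * (z l^(k+1)/(z i - z l)^2))" .
    qed
    have diag: "S$$(i,i) = 1 + \<nu>/z i + 2*(\<Sum>l\<in>A. (z i + z l)/(z i - z l)^2)"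
    proof -
      have "S$$(i,i) = 1 + 2 * \<nu> / (r i)^2 + 2 * ((\<Sum>l\<in>A. 1 / (r i - r l)^2) + (\<Sum>l\<in>A. 1 / (r i + r l)^2))"
        using Sij[OF i i] unfolding A_def by (simp add: algebra_simps)
      also have "(\<Sum>l\<in>A. 1 / (r i - r l)^2) + (\<Sum>l\<in>A. 1 / (r i + r l)^2) = (\<Sum>l\<in>A. (z i + z l)/(z i - z l)^2)"
        using t1 by (simp add: sum.distrib[symmetric])
      also have "2 * \<nu> / (r i)^2 = \<nu>/z i" using rsq[OF i] zi by simp
      finally show ?thesis .
    qed
    have "(\<Sum>j\<in>{0..<N}. S$$(i,j) * (r j * z j^k)) = S$$(i,i) * (r i * z i^k) + (\<Sum>j\<in>A. S$$(i,j) * (r j * z j^k))"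
      unfolding A_def using i by (simp add: sum.remove)
    also have "(\<Sum>j\<in>A. S$$(i,j) * (r j * z j^k)) = r i * (- 4 * (\<Sum>j\<in>A. z j^(k+1)/(z i - z j)^2))"
      using t2 by (simp add: sum_distrib_left)
    also have "S$$(i,i) * (r i * z i^k) = r i * (z i^k + \<nu>*z i^k/z i + 2*(\<Sum>l\<in>A. (z i + z l)*z i^k/(z i - z l)^2))"
      unfolding diag by (simp add: algebra_simps sum_distrib_left sum_distrib_right)
    finally have "(\<Sum>j\<in>{0..<N}. S$$(i,j) * (r j * z j^k)) = r i * (z i^k + \<nu>*z i^k/z i + 2*(\<Sum>l\<in>A. (z i + z l)*z i^k/(z i - z l)^2)
       - 4*(\<Sum>j\<in>A. z j^(k+1)/(z i - z j)^2))" by (simp add: algebra_simps)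
    also have "\<dots> = r i * ((2*real k+2)*z i^k - 2*real k*\<nu>*z i^k/z i - 4*(\<Sum>b<k. real(k-b)*z i^(k-1-b)*(\<Sum>j\<in>A. z j^b)))"
      by (subst row_z[OF finA zi ne stj]) simp_all
    also have "(\<lambda>b. \<Sum>j\<in>A. z j^b) = (\<lambda>b. P b - z i^b)"
      unfolding A_def P_def using i by (auto simp: sum_diff1)
    also have "(2*real k+2)*z i^k - 2*real k*\<nu>*z i^k/z i - 4*(\<Sum>b<k. real(k-b)*z i^(k-1-b)*(P b - z i^b))
        = (2*real k+2)*z i^k + poly (Qp \<nu> P k) (z i)"
      using Qp_poly[OF zi, of \<nu> P k] by simp
    finally show ?thesis .
  qed
  have SX: "S * X = X * B"
  proof (rule eq_matI)
    fix i k assume "i < dim_row (X * B)" "k < dim_col (X * B)"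
    hence i: "i < N" and k: "k < N" using Xc Bc by auto
    have "(S * X) $$ (i,k) = (\<Sum>j\<in>{0..<N}. S$$(i,j) * (r j * z j^k))"
      using Sc Xc i k by (simp add: scalar_prod_def X_def)
    also have "\<dots> = r i * ((2*real k+2)*z i^k + poly (Qp \<nu> P k) (z i))" by (rule row[OF i])
    also have "poly (Qp \<nu> P k) (z i) = (\<Sum>m<N. coeff (Qp \<nu> P k) m * z i^m)"
      by (rule poly_trunc) (use k Qp_coeff in auto)
    also have "r i * ((2*real k+2)*z i^k + (\<Sum>m<N. coeff (Qp \<nu> P k) m * z i^m))
       = (\<Sum>m\<in>{0..<N}. (r i * z i ^ m) * ((if m = k then 2*real k+2 else 0) + coeff (Qp \<nu> P k) m))"
    proof -
      let ?c = "2*real k+2"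
      have "(\<Sum>m\<in>{0..<N}. (r i * z i ^ m) * ((if m = k then ?c else 0) + coeff (Qp \<nu> P k) m))
        = (\<Sum>m\<in>{0..<N}. (if m = k then r i * z i^k * ?c else 0) + r i * (coeff (Qp \<nu> P k) m * z i^m))"
        by (rule sum.cong) (auto simp: algebra_simps)
      also have "\<dots> = (\<Sum>m\<in>{0..<N}. (if m = k then r i * z i^k * ?c else 0)) + (\<Sum>m\<in>{0..<N}. r i * (coeff (Qp \<nu> P k) m * z i^m))"
        by (rule sum.distrib)
      also have "\<dots> = r i * z i^k * ?c + r i * (\<Sum>m<N. coeff (Qp \<nu> P k) m * z i^m)"
        using k by (simp add: sum_distrib_left lessThan_atLeast0)
      finally show ?thesis by (simp add: algebra_simps)
    qed
    also have "\<dots> = (X * B) $$ (i,k)"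
      using Bc Xc i k by (simp add: scalar_prod_def X_def B_def)
    finally show "(S * X) $$ (i,k) = (X * B) $$ (i,k)" .
  qed (use Sc Xc Bc in auto)
  have ut: "upper_triangular B" unfolding upper_triangular_def B_def
    by (auto simp: Qp_coeff)
  have detB: "det B = fact N * 2^N"
  proof -
    have "det B = (\<Prod>k\<in>{0..<N}. B $$ (k,k))"
      using det_upper_triangular[OF ut Bc] Bc by (simp add: prod_list_diag_prod)
    also have "\<dots> = (\<Prod>k\<in>{0..<N}. 2*real k+2)"
      by (rule prod.cong) (auto simp: B_def Qp_coeff)
    finally show ?thesis using prod_even by simp
  qed
  have detX: "det X \<noteq> 0"
  proof
    assume "det X = 0"
    then obtain v where v: "v \<in> carrier_vec N" "v \<noteq> 0\<^sub>v N" "X *\<^sub>v v = 0\<^sub>v N"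
      using det_0_iff_vec_prod_zero[OF Xc] by auto
    define q where "q = (\<Sum>k<N. monom (v $ k) k)"
    have cq: "coeff q m = (if m < N then v $ m else 0)" for m
      unfolding q_def by (simp add: coeff_sum coeff_monom)
    obtain m where m: "m < N" "v $ m \<noteq> 0" using v(1,2) by (metis eq_vecI carrier_vecD index_zero_vec)
    have q0: "q \<noteq> 0" using cq[of m] m by auto
    have dq: "degree q < N"
    proof -
      have "coeff q (degree q) \<noteq> 0" using q0 by simp
      thus ?thesis using cq by (metis not_less)
    qed
    have sub: "z ` {0..<N} \<subseteq> {x. poly q x = 0}"
    proof
      fix x assume "x \<in> z ` {0..<N}"
      then obtain i where i: "i < N" "x = z i" by auto
      have "(X *\<^sub>v v) $ i = (\<Sum>k\<in>{0..<N}. r i * z i ^ k * v $ k)"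
        using Xc v(1) i by (simp add: scalar_prod_def X_def)
      also have "\<dots> = r i * poly q (z i)"
        unfolding q_def by (simp add: poly_sum poly_monom sum_distrib_left lessThan_atLeast0 algebra_simps)
      finally have "r i * poly q (z i) = 0" using v(3) i by simp
      thus "x \<in> {x. poly q x = 0}" using rpos[OF i(1)] i by simp
    qed
    have "N = card (z ` {0..<N})" using inj by (simp add: card_image)
    also have "\<dots> \<le> card {x. poly q x = 0}" using sub poly_roots_finite[OF q0] by (rule card_mono[rotated])
    also have "\<dots> \<le> degree q" by (rule card_poly_roots_bound[OF q0])
    finally show False using dq by simp
  qed
  have e: "det S * det X = det X * det B"
    using det_mult[OF Sc Xc] det_mult[OF Xc Bc] SX by metis
  have "det S = det B" using e detX by (metis mult.commute mult_cancel_right)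
  thus ?thesis unfolding S_def detB .
qed

end
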